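(* Let $(G,\cdot)$ be a group, let $A$ be an abelian subgroup of $G$, and let $\mathcal{A}=\{\psi\in\operatorname{End}(G):\psi(G)\le A\}$. For $\psi\in\mathcal{A}$ define $g\circ_\psi h=g\cdot\psi(g)\cdot h\cdot\psi(g)^{-1}$. Then $(\circ_\psi:\psi\in\mathcal{A})$ is a brace block on $G$.
   Context: A skew brace is a triple $(G,\cdot,\circ)$ where $(G,\cdot)$ and $(G,\circ)$ are groups and $g\circ(h\cdot k)=(g\circ h)\cdot g^{-1}\cdot(g\circ k)$ for all $g,h,k$ ($g^{-1}$ the inverse for $\cdot$). A bi-skew brace is a triple $(G,\cdot,\circ)$ such that both $(G,\cdot,\circ)$ and $(G,\circ,\cdot)$ are skew braces. A brace block on a set $G$ is a family $\mathcal{F}$ of group operations on $G$ such that $(G,\circ,\diamond)$ is a bi-skew brace for all $\circ,\diamond\in\mathcal{F}$. *)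

theory Defs
  imports "HOL-Algebra.Group"
begin

definition group_of :: "'a set \<Rightarrow> ('a \<Rightarrow> 'a \<Rightarrow> 'a) \<Rightarrow> 'a monoid" where
  "group_of S f = \<lparr>carrier = S, mult = f,
     one = (THE e. e \<in> S \<and> (\<forall>x\<in>S. f e x = x \<and> f x e = x))\<rparr>"

definition is_group_op :: "'a set \<Rightarrow> ('a \<Rightarrow> 'a \<Rightarrow> 'a) \<Rightarrow> bool" where
  "is_group_op S f \<longleftrightarrow> group (group_of S f)"

definition skew_brace :: "'a set \<Rightarrow> ('a \<Rightarrow> 'a \<Rightarrow> 'a) \<Rightarrow> ('a \<Rightarrow> 'a \<Rightarrow> 'a) \<Rightarrow> bool" where
  "skew_brace S dot circ \<longleftrightarrow> is_group_op S dot \<and> is_group_op S circ \<and>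
     (\<forall>g\<in>S. \<forall>h\<in>S. \<forall>k\<in>S.
        circ g (dot h k) = dot (dot (circ g h) (inv\<^bsub>group_of S dot\<^esub> g)) (circ g k))"

definition bi_skew_brace :: "'a set \<Rightarrow> ('a \<Rightarrow> 'a \<Rightarrow> 'a) \<Rightarrow> ('a \<Rightarrow> 'a \<Rightarrow> 'a) \<Rightarrow> bool" where
  "bi_skew_brace S dot circ \<longleftrightarrow> skew_brace S dot circ \<and> skew_brace S circ dot"

definition brace_block :: "'a set \<Rightarrow> ('a \<Rightarrow> 'a \<Rightarrow> 'a) set \<Rightarrow> bool" where
  "brace_block S F \<longleftrightarrow> (\<forall>o1\<in>F. \<forall>o2\<in>F. bi_skew_brace S o1 o2)"

definition psi_op :: "('a, 'b) monoid_scheme \<Rightarrow> ('a \<Rightarrow> 'a) \<Rightarrow> 'a \<Rightarrow> 'a \<Rightarrow> 'a" where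
  "psi_op G \<psi> g h = g \<otimes>\<^bsub>G\<^esub> \<psi> g \<otimes>\<^bsub>G\<^esub> h \<otimes>\<^bsub>G\<^esub> inv\<^bsub>G\<^esub> (\<psi> g)"

end

theory Submission
  imports Defs
begin

locale bbctx = group G for G (structure) +
  fixes A :: "'a set"
  assumes subA: "subgroup A G"
    and commA: "\<forall>x\<in>A. \<forall>y\<in>A. x \<otimes> y = y \<otimes> x"
begin

definition good :: "('a \<Rightarrow> 'a) \<Rightarrow> bool" where
  "good \<psi> \<longleftrightarrow> \<psi> \<in> hom G G \<and> \<psi> ` carrier G \<subseteq> A"

lemma A_sub: "x \<in> A \<Longrightarrow> x \<in> carrier G"
  by (rule subsetD[OF subgroup.subset[OF subA]])

lemma A_inv: "x \<in> A \<Longrightarrow> inv x \<in> A"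
  by (rule subgroup.m_inv_closed[OF subA])

lemma comm: assumes "a \<in> A" "b \<in> A" shows "a \<otimes> b = b \<otimes> a"
  using bspec[OF bspec[OF commA assms(1)] assms(2)] .

lemma canc1 [simp]: "x \<in> carrier G \<Longrightarrow> y \<in> carrier G \<Longrightarrow> x \<otimes> (inv x \<otimes> y) = y"
  by (metis inv_closed m_assoc r_inv l_one)
lemma canc2 [simp]: "x \<in> carrier G \<Longrightarrow> y \<in> carrier G \<Longrightarrow> inv x \<otimes> (x \<otimes> y) = y"
  by (metis inv_closed m_assoc l_inv l_one)

lemma c2: "a \<in> A \<Longrightarrow> b \<in> A \<Longrightarrow> a \<otimes> b \<otimes> inv a = b"
  using comm[of a b] A_sub by (simp add: m_assoc)

lemma c2a: "a \<in> A \<Longrightarrow> b \<in> A \<Longrightarrow> x \<in> carrier G \<Longrightarrow> a \<otimes> (b \<otimes> (inv a \<otimes> x)) = b \<otimes> x"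
  using c2[of a b] A_sub by (simp add: m_assoc[symmetric])

lemma c2b: "a \<in> A \<Longrightarrow> b \<in> A \<Longrightarrow> x \<in> carrier G \<Longrightarrow> inv a \<otimes> (b \<otimes> (a \<otimes> x)) = b \<otimes> x"
  using c2a[of "inv a" b x] A_sub A_inv by simp

lemma good_A: "good \<psi> \<Longrightarrow> x \<in> carrier G \<Longrightarrow> \<psi> x \<in> A"
  unfolding good_def by blast

lemma good_c: "good \<psi> \<Longrightarrow> x \<in> carrier G \<Longrightarrow> \<psi> x \<in> carrier G"
  using good_A A_sub by blast

lemma good_gh: "good \<psi> \<Longrightarrow> group_hom G G \<psi>"
  by (rule group_hom.intro[OF is_group is_group]) (simp add: group_hom_axioms_def good_def)

lemma good_mult: "good \<psi> \<Longrightarrow> x \<in> carrier G \<Longrightarrow> y \<in> carrier G \<Longrightarrow> \<psi> (x \<otimes> y) = \<psi> x \<otimes> \<psi> y"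
  unfolding good_def by (simp add: hom_mult)

lemma good_inv: "good \<psi> \<Longrightarrow> x \<in> carrier G \<Longrightarrow> \<psi> (inv x) = inv (\<psi> x)"
  by (rule group_hom.hom_inv[OF good_gh])

lemma good_one: "good \<psi> \<Longrightarrow> \<psi> \<one> = \<one>"
  by (rule group_hom.hom_one[OF good_gh])

abbreviation p where "p \<psi> \<equiv> psi_op G \<psi>"

lemma p_closed: "good \<psi> \<Longrightarrow> g \<in> carrier G \<Longrightarrow> h \<in> carrier G \<Longrightarrow> p \<psi> g h \<in> carrier G"
  unfolding psi_op_def using good_c by simp

lemma phi_p: assumes "good \<phi>" "good \<psi>" "g \<in> carrier G" "h \<in> carrier G"
  shows "\<phi> (p \<psi> g h) = \<phi> g \<otimes> \<phi> h"
proof -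
  have "\<phi> (p \<psi> g h) = \<phi> g \<otimes> \<phi> (\<psi> g) \<otimes> \<phi> h \<otimes> inv (\<phi> (\<psi> g))"
    unfolding psi_op_def using assms good_c by (simp add: good_mult good_inv)
  also have "\<dots> = \<phi> g \<otimes> (\<phi> (\<psi> g) \<otimes> \<phi> h \<otimes> inv (\<phi> (\<psi> g)))"
    using assms good_c by (simp add: m_assoc)
  also have "\<dots> = \<phi> g \<otimes> \<phi> h"
    using c2 assms good_A good_c by simp
  finally show ?thesis .
qed

definition ii where "ii \<phi> g = inv (\<phi> g) \<otimes> inv g \<otimes> \<phi> g"

lemma ii_closed: "good \<phi> \<Longrightarrow> g \<in> carrier G \<Longrightarrow> ii \<phi> g \<in> carrier G"
  unfolding ii_def using good_c by simp

lemma phi_ii: assumes "good \<phi>" "g \<in> carrier G" shows "\<phi> (ii \<phi> g) = inv (\<phi> g)"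
proof -
  have "\<phi> (ii \<phi> g) = inv (\<phi> (\<phi> g)) \<otimes> inv (\<phi> g) \<otimes> inv (inv (\<phi> (\<phi> g)))"
    unfolding ii_def using assms good_c by (simp add: good_mult good_inv)
  also have "\<dots> = inv (\<phi> g)" using c2[of "inv (\<phi> (\<phi> g))" "inv (\<phi> g)"] A_inv assms good_A good_c by simp
  finally show ?thesis .
qed

lemma one_eq: assumes "good \<psi>" shows "one (group_of (carrier G) (p \<psi>)) = \<one>"
proof -
  have l: "p \<psi> \<one> x = x" if "x \<in> carrier G" for x
    unfolding psi_op_def using that good_one[OF assms] by simp
  have r: "p \<psi> x \<one> = x" if "x \<in> carrier G" for x
    unfolding psi_op_def using that assms good_c by (simp add: m_assoc)
  show ?thesis unfolding group_of_def
    apply simp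
    apply (rule the_equality)
    using l r apply auto[1]
    using l by (metis one_closed)
qed

lemma grp: assumes "good \<psi>" shows "is_group_op (carrier G) (p \<psi>)"
  unfolding is_group_op_def
proof (rule groupI)
  note c = good_c[OF assms] good_A[OF assms]
  show "\<one>\<^bsub>group_of (carrier G) (p \<psi>)\<^esub> \<in> carrier (group_of (carrier G) (p \<psi>))"
    using one_eq[OF assms] by (simp add: group_of_def)
  fix x y z assume xyz: "x \<in> carrier (group_of (carrier G) (p \<psi>))"
    "y \<in> carrier (group_of (carrier G) (p \<psi>))" "z \<in> carrier (group_of (carrier G) (p \<psi>))"
  then have x: "x \<in> carrier G" and y: "y \<in> carrier G" and z: "z \<in> carrier G" by (auto simp: group_of_def)
  show "x \<otimes>\<^bsub>group_of (carrier G) (p \<psi>)\<^esub> y \<in> carrier (group_of (carrier G) (p \<psi>))"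
    using p_closed[OF assms x y] by (simp add: group_of_def)
  show "\<one>\<^bsub>group_of (carrier G) (p \<psi>)\<^esub> \<otimes>\<^bsub>group_of (carrier G) (p \<psi>)\<^esub> x = x"
    using one_eq[OF assms] x good_one[OF assms] by (simp add: group_of_def psi_op_def)
  have "p \<psi> (p \<psi> x y) z = p \<psi> x (p \<psi> y z)"
    using phi_p[OF assms assms x y] x y z c
    by (simp add: psi_op_def m_assoc inv_mult_group)
  then show "x \<otimes>\<^bsub>group_of (carrier G) (p \<psi>)\<^esub> y \<otimes>\<^bsub>group_of (carrier G) (p \<psi>)\<^esub> z =
       x \<otimes>\<^bsub>group_of (carrier G) (p \<psi>)\<^esub> (y \<otimes>\<^bsub>group_of (carrier G) (p \<psi>)\<^esub> z)"
    by (simp add: group_of_def)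
  have "p \<psi> (ii \<psi> x) x = \<one>"
    using phi_ii[OF assms x] x c unfolding ii_def by (simp add: psi_op_def m_assoc)
  then show "\<exists>y\<in>carrier (group_of (carrier G) (p \<psi>)). y \<otimes>\<^bsub>group_of (carrier G) (p \<psi>)\<^esub> x = \<one>\<^bsub>group_of (carrier G) (p \<psi>)\<^esub>"
    using one_eq[OF assms] ii_closed[OF assms x] by (auto simp: group_of_def)
qed

lemma inv_eq: assumes "good \<phi>" "g \<in> carrier G"
  shows "inv\<^bsub>group_of (carrier G) (p \<phi>)\<^esub> g = ii \<phi> g"
proof -
  interpret H: group "group_of (carrier G) (p \<phi>)" using grp[OF assms(1)] by (simp add: is_group_op_def)
  have "p \<phi> (ii \<phi> g) g = \<one>"
    using phi_ii[OF assms] assms good_c unfolding ii_def by (simp add: psi_op_def m_assoc)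
  then show ?thesis
    using H.inv_equality[of "ii \<phi> g" g] one_eq[OF assms(1)] ii_closed[OF assms]  assms
    by (simp add: group_of_def)
qed

lemma brace_id: assumes f: "good \<phi>" and s: "good \<psi>" and g: "g \<in> carrier G"
   and h: "h \<in> carrier G" and k: "k \<in> carrier G"
  shows "p \<psi> g (p \<phi> h k) = p \<phi> (p \<phi> (p \<psi> g h) (ii \<phi> g)) (p \<psi> g k)"
proof -
  have Y: "\<phi> (p \<phi> (p \<psi> g h) (ii \<phi> g)) = \<phi> h"
    using phi_p[OF f f p_closed[OF s g h] ii_closed[OF f g]] phi_p[OF f s g h] phi_ii[OF f g]
      c2 f g h good_A by simp
  have A1: "\<phi> g \<in> A" "\<phi> h \<in> A" "\<psi> g \<in> A" "inv (\<phi> g) \<in> A" "inv (\<phi> h) \<in> A" "inv (\<psi> g) \<in> A"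
    using f s g h good_A A_inv by auto
  have C1: "\<phi> g \<in> carrier G" "\<phi> h \<in> carrier G" "\<psi> g \<in> carrier G"
    using A1 A_sub by auto
  have cm: "inv (\<psi> g) \<otimes> inv (\<phi> h) = inv (\<phi> h) \<otimes> inv (\<psi> g)"
    using comm A1 by blast
  define X where "X = p \<psi> g h"
  have Xc: "X \<in> carrier G" unfolding X_def using p_closed[OF s g h] .
  have fX: "\<phi> X = \<phi> g \<otimes> \<phi> h" unfolding X_def using phi_p[OF f s g h] .
  have Yd: "p \<phi> X (ii \<phi> g) = X \<otimes> (\<phi> g \<otimes> \<phi> h) \<otimes> ii \<phi> g \<otimes> inv (\<phi> g \<otimes> \<phi> h)"
    unfolding psi_op_def fX ..
  have R: "p \<phi> (p \<phi> X (ii \<phi> g)) (p \<psi> g k) = p \<phi> X (ii \<phi> g) \<otimes> \<phi> h \<otimes> p \<psi> g k \<otimes> inv (\<phi> h)"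
    unfolding psi_op_def[of G \<phi> "p \<phi> X (ii \<phi> g)"] using Y unfolding X_def by simp
  have "p \<phi> (p \<phi> (p \<psi> g h) (ii \<phi> g)) (p \<psi> g k)
      = X \<otimes> (\<phi> g \<otimes> \<phi> h) \<otimes> ii \<phi> g \<otimes> inv (\<phi> g \<otimes> \<phi> h) \<otimes> \<phi> h \<otimes> p \<psi> g k \<otimes> inv (\<phi> h)"
    using R Yd unfolding X_def by simp
  also have "\<dots> = p \<psi> g (p \<phi> h k)"
    using A1 C1 g h k cm unfolding X_def psi_op_def ii_def
    by (simp add: m_assoc inv_mult_group c2a c2b)
  finally show ?thesis by simp
qed

lemma sb: "good \<phi> \<Longrightarrow> good \<psi> \<Longrightarrow> skew_brace (carrier G) (p \<phi>) (p \<psi>)"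
  unfolding skew_brace_def using grp inv_eq brace_id by simp

end

theorem mainTheorem7:
  fixes G :: "('a, 'b) monoid_scheme" and A :: "'a set"
  assumes "group G"
    and "subgroup A G"
    and "\<forall>x\<in>A. \<forall>y\<in>A. x \<otimes>\<^bsub>G\<^esub> y = y \<otimes>\<^bsub>G\<^esub> x"
  shows "brace_block (carrier G) ((\<lambda>\<psi>. psi_op G \<psi>) ` {\<psi> \<in> hom G G. \<psi> ` carrier G \<subseteq> A})"
proof -
  interpret bbctx G A using assms by (simp add: bbctx_def bbctx_axioms_def)
  show ?thesis unfolding brace_block_def bi_skew_brace_def
    by (auto simp: good_def intro!: sb)
qed

end
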